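(* Let $S$ be a separable metric space and let $T$ be a $\sigma$-compact, locally compact topological space. Then the topology of locally uniform weak convergence on $C(T;\mathbf{M}(S))$ is metrizable.
   Context: $\mathbf{M}(S)$ denotes the set of finite Borel measures on $S$, equipped with the weak topology (the coarsest topology making $\mu\mapsto\int f\,d\mu$ continuous for every bounded continuous $f:S\to\mathbb{R}$). $C(T;\mathbf{M}(S))$ is the set of weakly continuous maps $t\mapsto\mu_t$ from $T$ to $\mathbf{M}(S)$. The uniformity of locally uniform weak convergence on $C(T;\mathbf{M}(S))$ is the uniformity generated by the subbase consisting of the sets $V(K;f,\varepsilon)=\{((\mu_t)_{t\in T},(\nu_t)_{t\in T})\in C(T;\mathbf{M}(S))^2 : \sup_{t\in K}|\int f\,d\mu_t-\int f\,d\nu_t|<\varepsilon\}$, indexed by compact $K\subset T$, bounded continuous $f:S\to\mathbb{R}$, and $\varepsilon>0$; the topology of locally uniform weak convergence is the topology induced by this uniformity. A sequence converges in it iff $\lim_n\sup_{t\in K}|\int f\,d\mu^{(n)}_t-\int f\,d\mu_t|=0$ for every compact $K\subset T$ and bounded continuous $f$. *)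

theory Defs
  imports "HOL-Analysis.Analysis"
begin

definition bcont :: "('a::metric_space \<Rightarrow> real) \<Rightarrow> bool" where
  "bcont f \<longleftrightarrow> continuous_on UNIV f \<and> bounded (range f)"

definition finite_borel_measure :: "'a::metric_space measure \<Rightarrow> bool" where
  "finite_borel_measure M \<longleftrightarrow> sets M = sets borel \<and> finite_measure M"

definition sigma_compact_space :: "'b topology \<Rightarrow> bool" where
  "sigma_compact_space X \<longleftrightarrow>
     (\<exists>F. countable F \<and> (\<forall>K\<in>F. compactin X K) \<and> \<Union>F = topspace X)"

text \<open>Continuity into the weak topology (the initial topology of the maps
  mu |-> integral f dmu, f bounded continuous) unfolds to continuity of every
  t |-> integral f d(mu t).\<close>
definition wcont_paths :: "'b topology \<Rightarrow> ('b \<Rightarrow> 'a::metric_space measure) set" where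
  "wcont_paths X = {\<mu>. (\<forall>t\<in>topspace X. finite_borel_measure (\<mu> t))
      \<and> (\<forall>t. t \<notin> topspace X \<longrightarrow> \<mu> t = undefined)
      \<and> (\<forall>f. bcont f \<longrightarrow> continuous_map X euclideanreal (\<lambda>t. integral\<^sup>L (\<mu> t) f))}"

text \<open>The subbase entourages V(K; f, eps).  (For K empty the supremum is
  taken as -infinity / 0, so the condition holds.)\<close>
definition lu_subbase :: "'b topology \<Rightarrow> (('b \<Rightarrow> 'a::metric_space measure) \<times> ('b \<Rightarrow> 'a measure)) set set" where
  "lu_subbase X = {{(\<mu>, \<nu>) \<in> wcont_paths X \<times> wcont_paths X.
        K = {} \<or> (SUP t\<in>K. \<bar>integral\<^sup>L (\<mu> t) f - integral\<^sup>L (\<nu> t) f\<bar>) < \<epsilon>}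
      | K f \<epsilon>. compactin X K \<and> bcont f \<and> \<epsilon> > 0}"

definition lu_uniformity :: "'b topology \<Rightarrow> (('b \<Rightarrow> 'a::metric_space measure) \<times> ('b \<Rightarrow> 'a measure)) set set" where
  "lu_uniformity X = {E. E \<subseteq> wcont_paths X \<times> wcont_paths X \<and>
      (\<exists>F. finite F \<and> F \<subseteq> lu_subbase X \<and> (wcont_paths X \<times> wcont_paths X) \<inter> \<Inter>F \<subseteq> E)}"

definition lu_topology :: "'b topology \<Rightarrow> ('b \<Rightarrow> 'a::metric_space measure) topology" where
  "lu_topology X = topology (\<lambda>U. U \<subseteq> wcont_paths X \<and>
      (\<forall>\<mu>\<in>U. \<exists>E\<in>lu_uniformity X. {\<nu>. (\<mu>, \<nu>) \<in> E} \<subseteq> U))"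

end

theory Submission
  imports Defs
begin

lemma bcont_meas: "bcont f \<Longrightarrow> sets M = sets borel \<Longrightarrow> f \<in> borel_measurable M"
  unfolding bcont_def
  by (metis borel_measurable_continuous_onI measurable_cong_sets)

lemma bcont_bound: "bcont f \<Longrightarrow> \<exists>B. \<forall>x. \<bar>f x\<bar> \<le> B"
  unfolding bcont_def bounded_iff by auto

lemma bcont_integrable:
  assumes "finite_borel_measure M" "bcont f" shows "integrable M f"
proof -
  interpret finite_measure M using assms(1) finite_borel_measure_def by auto
  obtain B where "\<forall>x. \<bar>f x\<bar> \<le> B" using bcont_bound[OF assms(2)] by auto
  then show ?thesis
    by (intro integrable_const_bound[where B=B]) (auto simp: bcont_meas assms(2) assms(1)[unfolded finite_borel_measure_def])
qed

lemma closed_measure_eq: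
  assumes M: "finite_borel_measure M" and N: "finite_borel_measure N"
    and eq: "\<And>f. bcont f \<Longrightarrow> integral\<^sup>L M f = integral\<^sup>L N f"
    and C: "closed (C::'a::metric_space set)" "C \<noteq> {}"
  shows "measure M C = measure N C"
proof -
  define s where "s n x = max 0 (1 - real (Suc n) * infdist x C)" for n x
  have bc: "bcont (s n)" for n
  proof -
    have "continuous_on UNIV (s n)" unfolding s_def by (intro continuous_intros)
    moreover have "range (s n) \<subseteq> {0..1}" unfolding s_def
      by (auto simp: infdist_nonneg)
    hence "bounded (range (s n))" by (meson bounded_closed_interval bounded_subset)
    ultimately show ?thesis by (simp add: bcont_def)
  qed
  have lim: "(\<lambda>n. s n x) \<longlonglongrightarrow> indicator C x" for x
  proof (cases "x \<in> C")
    case True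
    then have "infdist x C = 0" using C in_closed_iff_infdist_zero by blast
    then show ?thesis using True by (simp add: s_def)
  next
    case False
    then have p: "infdist x C > 0" using C infdist_pos_not_in_closed by blast
    obtain n0 where n0: "1 / infdist x C < real n0" using reals_Archimedean2 by blast
    have "eventually (\<lambda>n. s n x = 0) sequentially"
      unfolding eventually_sequentially
    proof (intro exI allI impI)
      fix n assume "n0 \<le> n"
      hence "1 / infdist x C < real (Suc n)" using n0 by linarith
      hence "1 < real (Suc n) * infdist x C" using p by (simp add: field_simps)
      thus "s n x = 0" by (simp add: s_def)
    qed
    then show ?thesis using False by (simp add: tendsto_eventually)
  qed
  have conv: "(\<lambda>n. integral\<^sup>L L (s n)) \<longlonglongrightarrow> measure L C" if L: "finite_borel_measure L" for L
  proof -
    interpret finite_measure L using L finite_borel_measure_def by auto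
    have sL: "sets L = sets borel" using L finite_borel_measure_def by auto
    have CL: "C \<in> sets L" using sL C by (simp add: borel_closed)
    hence im: "(indicator C :: _ \<Rightarrow> real) \<in> borel_measurable L" by simp
    have "(\<lambda>n. integral\<^sup>L L (s n)) \<longlonglongrightarrow> integral\<^sup>L L (indicator C)"
      apply (rule integral_dominated_convergence[where w="\<lambda>_. 1"])
      using sL C bcont_meas[OF bc sL] lim im unfolding s_def
      by (auto simp: infdist_nonneg)
    moreover have "integral\<^sup>L L (indicator C) = measure L C"
      using sL C by (simp add: borel_closed)
    ultimately show ?thesis by simp
  qed
  have "(\<lambda>n. integral\<^sup>L M (s n)) \<longlonglongrightarrow> measure N C"
    using conv[OF N] eq[OF bc] by simp
  with conv[OF M] show ?thesis using LIMSEQ_unique by blast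
qed

lemma fbm_eq:
  assumes M: "finite_borel_measure M" and N: "finite_borel_measure (N::'a::metric_space measure)"
    and eq: "\<And>f. bcont f \<Longrightarrow> integral\<^sup>L M f = integral\<^sup>L N f"
  shows "M = N"
proof -
  interpret M: finite_measure M using M finite_borel_measure_def by auto
  interpret N: finite_measure N using N finite_borel_measure_def by auto
  have sM: "sets M = sets borel" and sN: "sets N = sets borel"
    using M N finite_borel_measure_def by auto
  have sb: "sets (borel::'a measure) = sigma_sets UNIV (Collect closed)"
    by (subst borel_eq_closed) (simp add: sets_measure_of)
  show ?thesis
  proof (rule measure_eqI_generator_eq[where E="Collect closed :: 'a set set" and \<Omega>=UNIV and A="\<lambda>_. UNIV"])
    show "Int_stable (Collect closed)" by (auto simp: Int_stable_def closed_Int)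
    fix X :: "'a set" assume "X \<in> Collect closed"
    hence cX: "closed X" by simp
    show "emeasure M X = emeasure N X"
    proof (cases "X = {}")
      case False
      have "measure M X = measure N X" using closed_measure_eq[OF M N eq cX False] by simp
      moreover have "X \<in> sets M" "X \<in> sets N" using sM sN cX by auto
      ultimately show ?thesis by (simp add: M.emeasure_eq_measure N.emeasure_eq_measure)
    qed simp
  qed (use sM sN sb in auto)
qed

definition bump :: "'a::metric_space \<Rightarrow> real \<Rightarrow> real \<Rightarrow> 'a \<Rightarrow> real" where
  "bump x q r y = q * max 0 (1 - dist y x / r)"

fun gl :: "(nat \<Rightarrow> 'a::metric_space) \<Rightarrow> (nat \<times> nat \<times> nat \<times> nat) list \<Rightarrow> 'a \<Rightarrow> real" where
  "gl c [] y = 0"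
| "gl c ((k,i,j,l) # xs) y = max (bump (c k) (real i / real (Suc j)) (1 / real (Suc l)) y) (gl c xs y)"

definition gfam :: "(nat \<Rightarrow> 'a::metric_space) \<Rightarrow> nat \<Rightarrow> 'a \<Rightarrow> real" where
  "gfam c m = (case from_nat m of None \<Rightarrow> (\<lambda>_. 1) | Some xs \<Rightarrow> gl c xs)"

lemma bump_nonneg: "q \<ge> 0 \<Longrightarrow> 0 \<le> bump x q r y"
  unfolding bump_def by simp

lemma gl_nonneg: "0 \<le> gl c xs y"
  by (induction c xs y rule: gl.induct) (auto simp: le_max_iff_disj)

lemma gl_append: "gl c (xs @ ys) y = max (gl c xs y) (gl c ys y)"
proof (induction c xs y rule: gl.induct)
  case (1 c y)
  then show ?case using gl_nonneg[of c ys y] by (simp add: max_absorb2)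
next
  case (2 c k i j l xs y)
  then show ?case by (simp add: max.assoc)
qed
lemma gl_cont: "continuous_on UNIV (gl c xs)"
proof (induction xs)
  case Nil
  have "gl c [] = (\<lambda>_. 0)" by (rule ext) simp
  then show ?case by simp
next
  case (Cons a xs)
  obtain k i j l where a: "a = (k,i,j,l)" by (cases a) auto
  have "continuous_on UNIV (\<lambda>y. max (bump (c k) (real i / real (Suc j)) (1 / real (Suc l)) y) (gl c xs y))"
    unfolding bump_def by (intro continuous_intros Cons) auto
  then show ?case using a by simp
qed

definition glb :: "(nat \<times> nat \<times> nat \<times> nat) list \<Rightarrow> real" where
  "glb xs = sum_list (map (\<lambda>(k,i,j,l). real i / real (Suc j)) xs)"

lemma glb_nonneg: "0 \<le> glb xs"
  unfolding glb_def by (induction xs) auto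

lemma gl_le: "gl c xs y \<le> glb xs"
proof (induction c xs y rule: gl.induct)
  case (1 c y)
  then show ?case by (simp add: glb_def)
next
  case (2 c k i j l xs y)
  have "bump (c k) (real i / real (Suc j)) (1 / real (Suc l)) y \<le> real i / real (Suc j)"
    unfolding bump_def by (rule mult_left_le) auto
  moreover have "glb ((k,i,j,l) # xs) = real i / real (Suc j) + glb xs" by (simp add: glb_def)
  moreover have q: "0 \<le> real i / real (Suc j)" by simp
  moreover have "gl c xs y \<le> real i / real (Suc j) + glb xs" using 2 q by linarith
  ultimately show ?case using glb_nonneg[of xs] by (simp only: gl.simps)
qed

lemma bcont_gl: "bcont (gl c xs)"
  unfolding bcont_def
proof (intro conjI gl_cont)
  show "bounded (range (gl c xs))"
    unfolding bounded_iff
    by (rule exI[of _ "glb xs"]) (auto simp: gl_nonneg gl_le)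
qed

lemma bcont_const: "bcont (\<lambda>_. c)"
  unfolding bcont_def by auto

lemma bcont_gfam: "bcont (gfam c m)"
  unfolding gfam_def by (auto split: option.split simp: bcont_gl bcont_const)

lemma gfam_Some: "gfam c (to_nat (Some xs)) = gl c xs"
  unfolding gfam_def by simp

lemma gfam_None: "gfam c (to_nat (None :: (nat \<times> nat \<times> nat \<times> nat) list option)) = (\<lambda>_. 1)"
  unfolding gfam_def by simp

lemma approx_point:
  fixes \<phi> :: "'a::metric_space \<Rightarrow> real"
  assumes dense: "\<And>y e. e > 0 \<Longrightarrow> \<exists>k. dist y (c k) < e"
    and cont: "continuous_on UNIV \<phi>" and nn: "\<And>z. 0 \<le> \<phi> z" and e: "e > 0"
  shows "\<exists>xs. (\<forall>z. gl c xs z \<le> \<phi> z) \<and> \<phi> y - e < gl c xs y"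
proof (cases "\<phi> y < e")
  case True
  then show ?thesis by (intro exI[of _ "[]"]) (auto simp: nn)
next
  case False
  obtain j where j: "1 / real (Suc j) < e / 2"
    using e by (metis half_gt_zero_iff nat_approx_posE of_nat_Suc)
  define N where "N = real (Suc j)"
  have N: "N \<ge> 1" unfolding N_def by simp
  define i where "i = nat (\<lceil>\<phi> y * N\<rceil> - 1)"
  have pos: "\<phi> y * N > 0" using False e N by (intro mult_pos_pos) auto
  hence ci: "\<lceil>\<phi> y * N\<rceil> \<ge> 1" by simp
  have iint: "real i = real_of_int \<lceil>\<phi> y * N\<rceil> - 1" unfolding i_def using ci by (simp add: of_nat_nat)
  have i1: "real i < \<phi> y * N" using iint ceiling_correct[of "\<phi> y * N"] by linarith
  have i2: "\<phi> y * N \<le> real i + 1" using iint le_of_int_ceiling[of "\<phi> y * N"] by linarith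
  define q where "q = real i / N"
  have qlt: "q < \<phi> y" unfolding q_def using i1 N by (simp add: divide_less_eq mult.commute)
  have qge: "\<phi> y - e / 2 < q"
  proof -
    have "\<phi> y \<le> (real i + 1) / N" using i2 N by (simp add: le_divide_eq)
    also have "\<dots> = q + 1 / N" unfolding q_def by (simp add: add_divide_distrib)
    finally show ?thesis using j unfolding N_def by linarith
  qed
  have qpos: "q > 0" using qge False e by linarith
  obtain \<rho> where \<rho>: "\<rho> > 0" "\<And>z. dist z y < \<rho> \<Longrightarrow> dist (\<phi> z) (\<phi> y) < \<phi> y - q"
    using cont qlt unfolding continuous_on_iff by (metis UNIV_I diff_gt_0_iff_gt)
  have \<rho>': "\<phi> z > q" if "dist z y < \<rho>" for z
    using \<rho>(2)[OF that] by (simp add: dist_real_def)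
  obtain l where l: "1 / real (Suc l) < \<rho> / 2"
    using \<rho> by (metis half_gt_zero_iff nat_approx_posE of_nat_Suc)
  define r where "r = 1 / real (Suc l)"
  have rpos: "r > 0" unfolding r_def by simp
  obtain k where k: "dist y (c k) < min r (r * e / (2 * q))"
    using dense[of "min r (r * e / (2 * q))"] rpos e qpos by auto
  define x where "x = c k"
  have b_le: "bump x q r z \<le> \<phi> z" for z
  proof (cases "dist z x < r")
    case True
    have "dist z y \<le> dist z x + dist x y" by (rule dist_triangle)
    also have "\<dots> < 2 * r" using True k unfolding x_def by (simp add: dist_commute)
    also have "\<dots> < \<rho>" using l unfolding r_def by linarith
    finally have "\<phi> z > q" by (rule \<rho>')
    moreover have "bump x q r z \<le> q" unfolding bump_def using qpos rpos
      by (intro mult_left_le) auto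
    ultimately show ?thesis by linarith
  next
    case False
    hence "1 - dist z x / r \<le> 0" using rpos by (simp add: field_simps)
    hence "bump x q r z = 0" unfolding bump_def by simp
    then show ?thesis using nn by simp
  qed
  have dyx: "dist y x < r" "dist y x < r * e / (2 * q)" using k unfolding x_def by auto
  have "bump x q r y = q - q * (dist y x / r)"
    unfolding bump_def using dyx rpos by (simp add: field_simps)
  moreover have "q * (dist y x / r) < e / 2"
  proof -
    have "dist y x / r < e / (2 * q)" using dyx(2) rpos qpos by (simp add: field_simps)
    hence "q * (dist y x / r) < q * (e / (2 * q))" using mult_strict_left_mono qpos by blast
    thus ?thesis using qpos by simp
  qed
  ultimately have by_: "\<phi> y - e < bump x q r y" using qge by linarith
  have glx: "gl c [(k,i,j,l)] z = bump x q r z" for z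
    using bump_nonneg[of q x r z] qpos unfolding x_def q_def r_def N_def by simp
  show ?thesis
  proof (intro exI[of _ "[(k,i,j,l)]"] conjI allI)
    show "gl c [(k,i,j,l)] z \<le> \<phi> z" for z unfolding glx by (rule b_le)
    show "\<phi> y - e < gl c [(k,i,j,l)] y" unfolding glx by (rule by_)
  qed
qed

lemma lower_approx:
  fixes \<phi> :: "'a::metric_space \<Rightarrow> real"
  assumes dense: "\<And>y e. e > 0 \<Longrightarrow> \<exists>k. dist y (c k) < e"
    and cont: "continuous_on UNIV \<phi>" and nn: "\<And>z. 0 \<le> \<phi> z" and bd: "\<And>z. \<phi> z \<le> B"
    and M: "finite_borel_measure M" and eta: "\<eta> > 0"
  shows "\<exists>xs. (\<forall>z. gl c xs z \<le> \<phi> z) \<and> integral\<^sup>L M \<phi> - \<eta> < integral\<^sup>L M (gl c xs)"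
proof -
  define S where "S = {xs. \<forall>z. gl c xs z \<le> \<phi> z}"
  have SnE': "[] \<in> S" unfolding S_def using nn by auto
  hence SnE: "S \<noteq> {}" by blast
  define s where "s = from_nat_into S"
  have sS: "s n \<in> S" for n unfolding s_def using SnE by (rule from_nat_into)
  have sall: "\<exists>n. s n = xs" if "xs \<in> S" for xs
    using range_from_nat_into[OF SnE countableI_type] that unfolding s_def by (metis rangeE)
  define h where "h = rec_nat (s 0) (\<lambda>n acc. acc @ s (Suc n))"
  have h0: "h 0 = s 0" and hS: "h (Suc n) = h n @ s (Suc n)" for n unfolding h_def by simp_all
  have hle: "gl c (h n) z \<le> \<phi> z" for n z
    by (induction n) (use sS in \<open>auto simp: h0 hS gl_append S_def\<close>)
  have hge: "i \<le> n \<Longrightarrow> gl c (s i) z \<le> gl c (h n) z" for i n z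
  proof (induction n)
    case 0 then show ?case by (simp add: h0)
  next
    case (Suc n)
    then show ?case by (cases "i = Suc n") (auto simp: hS gl_append le_Suc_eq)
  qed
  have lim: "(\<lambda>n. gl c (h n) z) \<longlonglongrightarrow> \<phi> z" for z
    unfolding lim_sequentially
  proof (intro allI impI)
    fix r :: real assume r: "r > 0"
    obtain xs where xs: "\<forall>w. gl c xs w \<le> \<phi> w" "\<phi> z - r < gl c xs z"
      using approx_point[OF dense cont nn r] by blast
    then obtain i where i: "s i = xs" using sall unfolding S_def by blast
    show "\<exists>no. \<forall>n\<ge>no. dist (gl c (h n) z) (\<phi> z) < r"
    proof (intro exI allI impI)
      fix n assume "i \<le> n"
      hence "gl c xs z \<le> gl c (h n) z" using hge i by blast
      thus "dist (gl c (h n) z) (\<phi> z) < r" using xs(2) hle[of n z] by (simp add: dist_real_def)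
    qed
  qed
  have bcphi: "bcont \<phi>"
  proof -
    have "bounded (range \<phi>)" unfolding bounded_iff using nn bd
      by (intro exI[of _ B]) (auto simp: abs_of_nonneg)
    thus ?thesis using cont bcont_def by blast
  qed
  interpret finite_measure M using M finite_borel_measure_def by auto
  have sM: "sets M = sets borel" using M finite_borel_measure_def by auto
  have hb: "\<bar>gl c (h n) z\<bar> \<le> B" for n z
    using gl_nonneg[of c "h n" z] hle[of n z] bd[of z] by simp
  have "(\<lambda>n. integral\<^sup>L M (gl c (h n))) \<longlonglongrightarrow> integral\<^sup>L M \<phi>"
    apply (rule integral_dominated_convergence[where w="\<lambda>_. B"])
    using bcont_meas[OF bcphi sM] bcont_meas[OF bcont_gl sM] lim hb
    by auto
  then obtain n where "dist (integral\<^sup>L M (gl c (h n))) (integral\<^sup>L M \<phi>) < \<eta>"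
    using eta unfolding lim_sequentially by blast
  hence "integral\<^sup>L M \<phi> - \<eta> < integral\<^sup>L M (gl c (h n))" by (simp add: dist_real_def)
  thus ?thesis using hle by blast
qed

lemma integral_shift:
  assumes "finite_borel_measure L" "bcont f"
  shows "integral\<^sup>L L (\<lambda>x. f x + B) = integral\<^sup>L L f + B * integral\<^sup>L L (\<lambda>_. 1)"
    and "integral\<^sup>L L (\<lambda>x. B - f x) = B * integral\<^sup>L L (\<lambda>_. 1) - integral\<^sup>L L f"
proof -
  have i1: "integrable L f" using bcont_integrable assms by blast
  have i2: "integrable L (\<lambda>_. B)" using bcont_integrable[OF assms(1) bcont_const] .
  have "integral\<^sup>L L (\<lambda>_. B) = B * integral\<^sup>L L (\<lambda>_. 1)"
    using integral_mult_right_zero[of L B "\<lambda>_. 1"] by simp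
  then show "integral\<^sup>L L (\<lambda>x. f x + B) = integral\<^sup>L L f + B * integral\<^sup>L L (\<lambda>_. 1)"
    and "integral\<^sup>L L (\<lambda>x. B - f x) = B * integral\<^sup>L L (\<lambda>_. 1) - integral\<^sup>L L f"
    using Bochner_Integration.integral_add[OF i1 i2] Bochner_Integration.integral_diff[OF i2 i1] by simp_all
qed

lemma core:
  fixes f :: "'a::metric_space \<Rightarrow> real"
  assumes dns: "\<And>y e. e > 0 \<Longrightarrow> \<exists>k. dist y (c k) < e"
    and M0: "finite_borel_measure M0" and f: "bcont f" and eps: "\<epsilon> > 0"
  shows "\<exists>A \<delta>. finite A \<and> \<delta> > 0 \<and> (\<forall>M. finite_borel_measure M \<longrightarrow>
           (\<forall>m\<in>A. \<bar>integral\<^sup>L M (gfam c m) - integral\<^sup>L M0 (gfam c m)\<bar> < \<delta>) \<longrightarrow>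
           \<bar>integral\<^sup>L M f - integral\<^sup>L M0 f\<bar> < \<epsilon>)"
proof -
  obtain B0 where B0: "\<And>x. \<bar>f x\<bar> \<le> B0" using bcont_bound[OF f] by blast
  define B where "B = \<bar>B0\<bar>"
  have B: "\<And>x. \<bar>f x\<bar> \<le> B" "B \<ge> 0" unfolding B_def using B0 by (auto intro: order_trans[OF _ abs_ge_self])
  define \<eta> where "\<eta> = \<epsilon> / (B + 3)"
  have eta: "\<eta> > 0" unfolding \<eta>_def using eps B by simp
  have eta2: "(2 + B) * \<eta> < \<epsilon>" unfolding \<eta>_def using eps B by (simp add: field_simps)
  have fc: "continuous_on UNIV f" using f bcont_def by blast
  have p1: "continuous_on UNIV (\<lambda>x. f x + B)" "continuous_on UNIV (\<lambda>x. B - f x)"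
    using fc by (auto intro!: continuous_intros)
  have p2: "0 \<le> f z + B" "f z + B \<le> 2 * B" "0 \<le> B - f z" "B - f z \<le> 2 * B" for z
    using B(1)[of z] by (auto simp: abs_le_iff)
  obtain xs1 where xs1: "\<forall>z. gl c xs1 z \<le> f z + B"
      "integral\<^sup>L M0 (\<lambda>x. f x + B) - \<eta> < integral\<^sup>L M0 (gl c xs1)"
    using lower_approx[OF dns p1(1) p2(1) p2(2) M0 eta] by blast
  obtain xs2 where xs2: "\<forall>z. gl c xs2 z \<le> B - f z"
      "integral\<^sup>L M0 (\<lambda>x. B - f x) - \<eta> < integral\<^sup>L M0 (gl c xs2)"
    using lower_approx[OF dns p1(2) p2(3) p2(4) M0 eta] by blast
  define A where "A = {to_nat (Some xs1), to_nat (Some xs2), to_nat (None :: (nat \<times> nat \<times> nat \<times> nat) list option)}"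
  show ?thesis
  proof (intro exI[of _ A] exI[of _ \<eta>] conjI allI impI)
    show "finite A" unfolding A_def by simp
    show "\<eta> > 0" by (rule eta)
    fix M assume M: "finite_borel_measure M"
      and cl: "\<forall>m\<in>A. \<bar>integral\<^sup>L M (gfam c m) - integral\<^sup>L M0 (gfam c m)\<bar> < \<eta>"
    have c1: "\<bar>integral\<^sup>L M (gl c xs1) - integral\<^sup>L M0 (gl c xs1)\<bar> < \<eta>"
      using cl unfolding A_def by (auto simp: gfam_Some)
    have c2: "\<bar>integral\<^sup>L M (gl c xs2) - integral\<^sup>L M0 (gl c xs2)\<bar> < \<eta>"
      using cl unfolding A_def by (auto simp: gfam_Some)
    have c0: "\<bar>integral\<^sup>L M (\<lambda>_. 1) - integral\<^sup>L M0 (\<lambda>_. 1)\<bar> < \<eta>"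
      using cl unfolding A_def by (auto simp: gfam_None)
    have iF: "integrable M f" and iB: "integrable M (\<lambda>_. B)"
      and ig1: "integrable M (gl c xs1)" and ig2: "integrable M (gl c xs2)"
      using bcont_integrable[OF M] bcont_gl f bcont_const by auto
    have m1: "integral\<^sup>L M (gl c xs1) \<le> integral\<^sup>L M (\<lambda>x. f x + B)"
      by (rule integral_mono[OF ig1 Bochner_Integration.integrable_add[OF iF iB]]) (use xs1 in auto)
    have m2: "integral\<^sup>L M (gl c xs2) \<le> integral\<^sup>L M (\<lambda>x. B - f x)"
      by (rule integral_mono[OF ig2 Bochner_Integration.integrable_diff[OF iB iF]]) (use xs2 in auto)
    define a where "a = integral\<^sup>L M f"
    define a0 where "a0 = integral\<^sup>L M0 f"
    define m where "m = integral\<^sup>L M (\<lambda>_. 1::real)"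
    define m0 where "m0 = integral\<^sup>L M0 (\<lambda>_. 1::real)"
    have e1: "integral\<^sup>L M (\<lambda>x. f x + B) = a + B * m" "integral\<^sup>L M (\<lambda>x. B - f x) = B * m - a"
      using integral_shift[OF M f] unfolding a_def m_def by auto
    have e0: "integral\<^sup>L M0 (\<lambda>x. f x + B) = a0 + B * m0" "integral\<^sup>L M0 (\<lambda>x. B - f x) = B * m0 - a0"
      using integral_shift[OF M0 f] unfolding a0_def m0_def by auto
    have "\<bar>m - m0\<bar> < \<eta>" using c0 unfolding m_def m0_def .
    hence Bm: "B * \<bar>m - m0\<bar> \<le> B * \<eta>" using B(2) by (intro mult_left_mono) auto
    have "B * \<bar>m - m0\<bar> = \<bar>B * m - B * m0\<bar>" using B(2) by (simp add: abs_mult flip: right_diff_distrib)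
    with Bm have Bm': "\<bar>B * m - B * m0\<bar> \<le> B * \<eta>" by simp
    have "a > a0 - (2 + B) * \<eta>"
      using xs1(2) c1 m1 e1 e0 Bm' by (simp add: algebra_simps abs_le_iff abs_less_iff)
    moreover have "a < a0 + (2 + B) * \<eta>"
      using xs2(2) c2 m2 e1 e0 Bm' by (simp add: algebra_simps abs_le_iff abs_less_iff)
    ultimately show "\<bar>integral\<^sup>L M f - integral\<^sup>L M0 f\<bar> < \<epsilon>"
      using eta2 unfolding a_def[symmetric] a0_def[symmetric] by (simp add: abs_less_iff)
  qed
qed

lemma compact_finite_subcover:
  assumes "compactin X K" "\<And>x. x \<in> K \<Longrightarrow> openin X (U x)" "\<And>x. x \<in> K \<Longrightarrow> x \<in> U x"
  shows "\<exists>K0. K0 \<subseteq> K \<and> finite K0 \<and> K \<subseteq> \<Union>(U ` K0)"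
proof -
  have c: "(\<forall>V\<in>U ` K. openin X V) \<and> K \<subseteq> \<Union>(U ` K)" using assms(2,3) by auto
  have h: "\<forall>\<U>. (\<forall>U \<in> \<U>. openin X U) \<and> K \<subseteq> \<Union>\<U> \<longrightarrow> (\<exists>\<F>. finite \<F> \<and> \<F> \<subseteq> \<U> \<and> K \<subseteq> \<Union>\<F>)"
    using assms(1) unfolding compactin_def by (rule conjunct2)
  have "\<exists>F. finite F \<and> F \<subseteq> U ` K \<and> K \<subseteq> \<Union>F"
    using h[rule_format, OF c] .
  then obtain F where F: "finite F" "F \<subseteq> U ` K" "K \<subseteq> \<Union>F" by blast
  then obtain K0 where "K0 \<subseteq> K" "finite K0" "F = U ` K0" using finite_subset_image[OF F(1) F(2)] by blast
  thus ?thesis using F by blast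
qed

lemma compact_interior_cover:
  assumes lc: "locally_compact_space X" and K: "compactin X K"
  shows "\<exists>K'. compactin X K' \<and> K \<subseteq> X interior_of K'"
proof -
  have Kt: "K \<subseteq> topspace X" using K compactin_subset_topspace by blast
  have h1: "\<forall>x\<in>K. \<exists>U C. openin X U \<and> compactin X C \<and> x \<in> U \<and> U \<subseteq> C"
  proof
    fix x assume "x \<in> K"
    hence "x \<in> topspace X" using Kt by blast
    thus "\<exists>U C. openin X U \<and> compactin X C \<and> x \<in> U \<and> U \<subseteq> C"
      using lc unfolding locally_compact_space_def by blast
  qed
  obtain U where U: "\<forall>x\<in>K. \<exists>C. openin X (U x) \<and> compactin X C \<and> x \<in> U x \<and> U x \<subseteq> C"
    using bchoice[OF h1] by (elim exE) 
  obtain C where UC': "\<forall>x\<in>K. openin X (U x) \<and> compactin X (C x) \<and> x \<in> U x \<and> U x \<subseteq> C x"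
    using bchoice[OF U] by (elim exE)
  hence UC: "\<And>x. x \<in> K \<Longrightarrow> openin X (U x) \<and> compactin X (C x) \<and> x \<in> U x \<and> U x \<subseteq> C x" by blast
  obtain K0 where K0: "K0 \<subseteq> K" "finite K0" "K \<subseteq> \<Union>(U ` K0)"
    using compact_finite_subcover[of X K U] K UC by blast
  have "compactin X (\<Union>(C ` K0))" using K0 UC by (intro compactin_Union) auto
  moreover have "\<Union>(U ` K0) \<subseteq> X interior_of (\<Union>(C ` K0))"
  proof (rule interior_of_maximal)
    show "\<Union>(U ` K0) \<subseteq> \<Union>(C ` K0)" using K0(1) UC by blast
    show "openin X (\<Union>(U ` K0))" using K0(1) UC by (intro openin_Union) auto
  qed
  ultimately show ?thesis using K0 by blast
qed

lemma exhaustion: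
  assumes sc: "sigma_compact_space X" and lc: "locally_compact_space X"
  shows "\<exists>L::nat \<Rightarrow> _. (\<forall>n. compactin X (L n)) \<and> (\<forall>K. compactin X K \<longrightarrow> (\<exists>n. K \<subseteq> L n))"
proof -
  obtain F where F0: "countable F \<and> (\<forall>K\<in>F. compactin X K) \<and> \<Union>F = topspace X"
    using sc unfolding sigma_compact_space_def by (elim exE)
  hence F: "countable F" "\<And>K. K \<in> F \<Longrightarrow> compactin X K" "\<Union>F = topspace X" by auto
  show ?thesis
  proof (cases "F = {}")
    case True
    have "K \<subseteq> {}" if "compactin X K" for K
      using compactin_subset_topspace[OF that] F(3) True by simp
    then show ?thesis by (intro exI[of _ "\<lambda>_. {}"]) simp
  next
    case False
    define C where "C = from_nat_into F"
    have Cc: "compactin X (C n)" for n unfolding C_def by (rule F(2)[OF from_nat_into[OF False]])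
    have rC: "range C = F" unfolding C_def by (rule range_from_nat_into[OF False F(1)])
    have CU: "(\<Union>n. C n) = topspace X" by (simp only: rC F(3))
    define E where "E K = (SOME K'. compactin X K' \<and> K \<subseteq> X interior_of K')" for K
    have E: "compactin X K \<Longrightarrow> compactin X (E K) \<and> K \<subseteq> X interior_of (E K)" for K
    proof -
      assume "compactin X K"
      hence "\<exists>K'. compactin X K' \<and> K \<subseteq> X interior_of K'" by (rule compact_interior_cover[OF lc])
      thus ?thesis unfolding E_def by (rule someI_ex)
    qed
    define L where "L = rec_nat (E (C 0)) (\<lambda>n A. E (A \<union> C (Suc n)))"
    have L0: "L 0 = E (C 0)" and LS: "L (Suc n) = E (L n \<union> C (Suc n))" for n unfolding L_def by simp_all
    have Lc: "compactin X (L n)" for n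
    proof (induction n)
      case 0 show ?case unfolding L0 using E[OF Cc] by blast
    next
      case (Suc n) show ?case unfolding LS using E[OF compactin_Un[OF Suc Cc]] by blast
    qed
    have LC: "C n \<subseteq> X interior_of L n" for n
    proof (cases n)
      case 0 thus ?thesis using E[OF Cc[of 0]] by (simp add: L0)
    next
      case (Suc m)
      show ?thesis unfolding Suc LS using E[OF compactin_Un[OF Lc[of m] Cc[of "Suc m"]]] by blast
    qed
    have LL: "L n \<subseteq> X interior_of L (Suc n)" for n
      unfolding LS using E[OF compactin_Un[OF Lc[of n] Cc[of "Suc n"]]] by blast
    have LsubS: "L n \<subseteq> L (Suc n)" for n
      using LL[of n] interior_of_subset[of X "L (Suc n)"] by (rule order_trans)
    have mono: "L n \<subseteq> L m" if "n \<le> m" for n m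
      by (rule lift_Suc_mono_le[of L, OF LsubS that])
    have main: "\<exists>n. K \<subseteq> L n" if K: "compactin X K" for K
    proof -
      define I where "I x = (SOME n. x \<in> X interior_of L n)" for x
      have I: "x \<in> X interior_of L (I x)" if "x \<in> K" for x
      proof -
        have "x \<in> topspace X" using K that compactin_subset_topspace by blast
        hence "x \<in> (\<Union>n. C n)" by (simp only: CU)
        then obtain n where "x \<in> C n" by (rule UN_E)
        hence "\<exists>n. x \<in> X interior_of L n" using LC by blast
        thus ?thesis unfolding I_def by (rule someI_ex)
      qed
      have "\<exists>K0. K0 \<subseteq> K \<and> finite K0 \<and> K \<subseteq> (\<Union>x\<in>K0. X interior_of L (I x))"
        by (rule compact_finite_subcover[OF K]) (simp_all add: I)
      then obtain K0 where K0: "K0 \<subseteq> K" "finite K0" "K \<subseteq> (\<Union>x\<in>K0. X interior_of L (I x))"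
        by (elim exE conjE)
      define N where "N = Max (insert 0 (I ` K0))"
      have "X interior_of L (I x) \<subseteq> L N" if "x \<in> K0" for x
      proof -
        have "I x \<le> N" unfolding N_def using K0(2) that by simp
        have "X interior_of L (I x) \<subseteq> L (I x)" by (rule interior_of_subset)
        also have "\<dots> \<subseteq> L N" by (rule mono) fact
        finally show ?thesis .
      qed
      hence "(\<Union>x\<in>K0. X interior_of L (I x)) \<subseteq> L N" by (rule UN_least)
      hence "K \<subseteq> L N" using K0(3) by (rule order_trans[rotated])
      thus "\<exists>n. K \<subseteq> L n" by (rule exI)
    qed
    have A1: "\<forall>n. compactin X (L n)" using Lc by simp
    have A2: "\<forall>K. compactin X K \<longrightarrow> (\<exists>n. K \<subseteq> L n)" using main by simp
    show ?thesis using A1 A2 by blast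
  qed
qed

definition sp :: "'b set \<Rightarrow> ('a::metric_space \<Rightarrow> real) \<Rightarrow> ('b \<Rightarrow> 'a measure) \<Rightarrow> ('b \<Rightarrow> 'a measure) \<Rightarrow> real" where
  "sp K f \<mu> \<nu> = (if K = {} then 0 else (SUP t\<in>K. \<bar>integral\<^sup>L (\<mu> t) f - integral\<^sup>L (\<nu> t) f\<bar>))"

lemma pcont: "\<mu> \<in> wcont_paths X \<Longrightarrow> bcont f \<Longrightarrow> continuous_map X euclideanreal (\<lambda>t. integral\<^sup>L (\<mu> t) f)"
  unfolding wcont_paths_def by blast

lemma pfbm: "\<mu> \<in> wcont_paths X \<Longrightarrow> t \<in> topspace X \<Longrightarrow> finite_borel_measure (\<mu> t)"
  unfolding wcont_paths_def by blast

lemma dcont: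
  assumes "\<mu> \<in> wcont_paths X" "\<nu> \<in> wcont_paths X" "bcont f"
  shows "continuous_map X euclideanreal (\<lambda>t. \<bar>integral\<^sup>L (\<mu> t) f - integral\<^sup>L (\<nu> t) f\<bar>)"
  by (intro continuous_map_real_abs continuous_map_diff pcont assms)

lemma sp_bdd:
  assumes "\<mu> \<in> wcont_paths X" "\<nu> \<in> wcont_paths X" "bcont f" "compactin X K"
  shows "bdd_above ((\<lambda>t. \<bar>integral\<^sup>L (\<mu> t) f - integral\<^sup>L (\<nu> t) f\<bar>) ` K)"
proof -
  have "compactin euclideanreal ((\<lambda>t. \<bar>integral\<^sup>L (\<mu> t) f - integral\<^sup>L (\<nu> t) f\<bar>) ` K)"
    by (rule image_compactin[OF assms(4) dcont[OF assms(1-3)]])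
  hence "compact ((\<lambda>t. \<bar>integral\<^sup>L (\<mu> t) f - integral\<^sup>L (\<nu> t) f\<bar>) ` K)" by simp
  thus ?thesis by (intro bounded_imp_bdd_above compact_imp_bounded)
qed

lemma sp_ge:
  assumes "\<mu> \<in> wcont_paths X" "\<nu> \<in> wcont_paths X" "bcont f" "compactin X K" "t \<in> K"
  shows "\<bar>integral\<^sup>L (\<mu> t) f - integral\<^sup>L (\<nu> t) f\<bar> \<le> sp K f \<mu> \<nu>"
  using cSUP_upper[OF assms(5) sp_bdd[OF assms(1-4)]] assms(5) unfolding sp_def by auto

lemma sp_le:
  assumes "0 \<le> a" "\<And>t. t \<in> K \<Longrightarrow> \<bar>integral\<^sup>L (\<mu> t) f - integral\<^sup>L (\<nu> t) f\<bar> \<le> a"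
  shows "sp K f \<mu> \<nu> \<le> a"
proof (cases "K = {}")
  case False
  show ?thesis unfolding sp_def using False by (simp add: cSUP_least assms(2))
qed (simp add: sp_def assms(1))

lemma sp_nonneg: "0 \<le> sp K f \<mu> \<nu>" if "\<mu> \<in> wcont_paths X" "\<nu> \<in> wcont_paths X" "bcont f" "compactin X K"
proof (cases "K = {}")
  case False
  then obtain t where "t \<in> K" by blast
  thus ?thesis using sp_ge[OF that \<open>t \<in> K\<close>] by (meson abs_ge_zero order_trans)
qed (simp add: sp_def)

lemma sp_commute: "sp K f \<mu> \<nu> = sp K f \<nu> \<mu>"
  unfolding sp_def by (simp add: abs_minus_commute)

lemma sp_tri:
  assumes "\<mu> \<in> wcont_paths X" "\<nu> \<in> wcont_paths X" "\<rho> \<in> wcont_paths X" "bcont f" "compactin X K"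
  shows "sp K f \<mu> \<rho> \<le> sp K f \<mu> \<nu> + sp K f \<nu> \<rho>"
proof (rule sp_le)
  show "0 \<le> sp K f \<mu> \<nu> + sp K f \<nu> \<rho>"
    using sp_nonneg[OF assms(1,2,4,5)] sp_nonneg[OF assms(2,3,4,5)] by simp
  fix t assume t: "t \<in> K"
  have "\<bar>integral\<^sup>L (\<mu> t) f - integral\<^sup>L (\<rho> t) f\<bar> \<le> \<bar>integral\<^sup>L (\<mu> t) f - integral\<^sup>L (\<nu> t) f\<bar> + \<bar>integral\<^sup>L (\<nu> t) f - integral\<^sup>L (\<rho> t) f\<bar>"
    by simp
  also have "\<dots> \<le> sp K f \<mu> \<nu> + sp K f \<nu> \<rho>"
    using sp_ge[OF assms(1,2,4,5) t] sp_ge[OF assms(2,3,4,5) t] by simp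
  finally show "\<bar>integral\<^sup>L (\<mu> t) f - integral\<^sup>L (\<rho> t) f\<bar> \<le> sp K f \<mu> \<nu> + sp K f \<nu> \<rho>" .
qed

lemma sp_lt_iff:
  assumes "\<epsilon> > 0"
  shows "(K = {} \<or> (SUP t\<in>K. \<bar>integral\<^sup>L (\<mu> t) f - integral\<^sup>L (\<nu> t) f\<bar>) < \<epsilon>) \<longleftrightarrow> sp K f \<mu> \<nu> < \<epsilon>"
  using assms unfolding sp_def by auto

definition tm :: "(nat \<Rightarrow> 'b set) \<Rightarrow> (nat \<Rightarrow> 'a::metric_space \<Rightarrow> real) \<Rightarrow> ('b \<Rightarrow> 'a measure) \<Rightarrow> ('b \<Rightarrow> 'a measure) \<Rightarrow> nat \<Rightarrow> real" where
  "tm L g \<mu> \<nu> j = (1/2)^j * min 1 (sp (L (fst (prod_decode j))) (g (snd (prod_decode j))) \<mu> \<nu>)"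

definition dd :: "(nat \<Rightarrow> 'b set) \<Rightarrow> (nat \<Rightarrow> 'a::metric_space \<Rightarrow> real) \<Rightarrow> ('b \<Rightarrow> 'a measure) \<Rightarrow> ('b \<Rightarrow> 'a measure) \<Rightarrow> real" where
  "dd L g \<mu> \<nu> = (\<Sum>j. tm L g \<mu> \<nu> j)"

locale lus =
  fixes X :: "'b topology" and L :: "nat \<Rightarrow> 'b set" and g :: "nat \<Rightarrow> 'a::metric_space \<Rightarrow> real"
  assumes Lc: "\<And>n. compactin X (L n)" and gb: "\<And>m. bcont (g m)"
begin

abbreviation "C \<equiv> wcont_paths X :: ('b \<Rightarrow> 'a measure) set"

lemma tm_nonneg: "\<mu> \<in> C \<Longrightarrow> \<nu> \<in> C \<Longrightarrow> 0 \<le> tm L g \<mu> \<nu> j"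
  unfolding tm_def using sp_nonneg[OF _ _ gb Lc] by simp

lemma tm_le: "\<mu> \<in> C \<Longrightarrow> \<nu> \<in> C \<Longrightarrow> tm L g \<mu> \<nu> j \<le> (1/2)^j"
  unfolding tm_def by (simp add: mult_left_le)

lemma tm_summable: "\<mu> \<in> C \<Longrightarrow> \<nu> \<in> C \<Longrightarrow> summable (tm L g \<mu> \<nu>)"
  by (rule summable_comparison_test'[OF summable_geometric[of "1/2::real"]])
     (use tm_nonneg tm_le in auto)

lemma dd_nonneg: "\<mu> \<in> C \<Longrightarrow> \<nu> \<in> C \<Longrightarrow> 0 \<le> dd L g \<mu> \<nu>"
  unfolding dd_def by (rule suminf_nonneg[OF tm_summable]) (use tm_nonneg in auto)

lemma dd_commute: "dd L g \<mu> \<nu> = dd L g \<nu> \<mu>"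
  unfolding dd_def tm_def by (simp add: sp_commute)

lemma min_tri: "a \<le> b + c \<Longrightarrow> 0 \<le> b \<Longrightarrow> 0 \<le> c \<Longrightarrow> min 1 a \<le> min 1 b + min (1::real) c"
  by (simp add: min_def)

lemma dd_tri:
  assumes "\<mu> \<in> C" "\<nu> \<in> C" "\<rho> \<in> C"
  shows "dd L g \<mu> \<rho> \<le> dd L g \<mu> \<nu> + dd L g \<nu> \<rho>"
proof -
  have "tm L g \<mu> \<rho> j \<le> tm L g \<mu> \<nu> j + tm L g \<nu> \<rho> j" for j
  proof -
    let ?K = "L (fst (prod_decode j))" and ?f = "g (snd (prod_decode j))"
    have "min 1 (sp ?K ?f \<mu> \<rho>) \<le> min 1 (sp ?K ?f \<mu> \<nu>) + min 1 (sp ?K ?f \<nu> \<rho>)"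
      by (rule min_tri[OF sp_tri[OF assms gb Lc] sp_nonneg[OF assms(1,2) gb Lc] sp_nonneg[OF assms(2,3) gb Lc]])
    hence "(1/2)^j * min 1 (sp ?K ?f \<mu> \<rho>) \<le> (1/2)^j * (min 1 (sp ?K ?f \<mu> \<nu>) + min 1 (sp ?K ?f \<nu> \<rho>))"
      by (intro mult_left_mono) auto
    thus ?thesis unfolding tm_def by (simp add: distrib_left)
  qed
  hence "dd L g \<mu> \<rho> \<le> (\<Sum>j. tm L g \<mu> \<nu> j + tm L g \<nu> \<rho> j)"
    unfolding dd_def by (intro suminf_le summable_add tm_summable assms)
  also have "\<dots> = dd L g \<mu> \<nu> + dd L g \<nu> \<rho>"
    unfolding dd_def by (rule suminf_add[symmetric]) (intro tm_summable assms)+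
  finally show ?thesis .
qed

lemma tm_le_dd: "\<mu> \<in> C \<Longrightarrow> \<nu> \<in> C \<Longrightarrow> tm L g \<mu> \<nu> j \<le> dd L g \<mu> \<nu>"
  unfolding dd_def using sum_le_suminf[OF tm_summable, of \<mu> \<nu> "{j}"] tm_nonneg by auto

lemma dd_zero_sp:
  assumes "\<mu> \<in> C" "\<nu> \<in> C" "dd L g \<mu> \<nu> = 0"
  shows "sp (L n) (g m) \<mu> \<nu> = 0"
proof -
  have "tm L g \<mu> \<nu> (prod_encode (n, m)) = 0"
    using tm_le_dd[OF assms(1,2), of "prod_encode (n, m)"] tm_nonneg[OF assms(1,2), of "prod_encode (n, m)"] assms(3) by linarith
  hence "min 1 (sp (L n) (g m) \<mu> \<nu>) = 0" unfolding tm_def by simp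
  thus ?thesis by (simp add: min_def split: if_splits)
qed

end

lemma core_eq:
  assumes dns: "\<And>y e. e > 0 \<Longrightarrow> \<exists>k. dist y (c k) < e"
    and M: "finite_borel_measure M" and N: "finite_borel_measure N"
    and eq: "\<And>m. integral\<^sup>L M (gfam c m) = integral\<^sup>L N (gfam c m)"
  shows "M = N"
proof (rule fbm_eq[OF M N])
  fix f :: "'a \<Rightarrow> real" assume f: "bcont f"
  show "integral\<^sup>L M f = integral\<^sup>L N f"
  proof (rule ccontr)
    assume ne: "integral\<^sup>L M f \<noteq> integral\<^sup>L N f"
    define \<epsilon> where "\<epsilon> = \<bar>integral\<^sup>L M f - integral\<^sup>L N f\<bar>"
    have eps: "\<epsilon> > 0" unfolding \<epsilon>_def using ne by simp
    obtain A \<delta> where Ad: "finite A" "\<delta> > 0" "\<forall>M'. finite_borel_measure M' \<longrightarrow>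
           (\<forall>m\<in>A. \<bar>integral\<^sup>L M' (gfam c m) - integral\<^sup>L N (gfam c m)\<bar> < \<delta>) \<longrightarrow>
           \<bar>integral\<^sup>L M' f - integral\<^sup>L N f\<bar> < \<epsilon>"
    proof -
      have "\<exists>A \<delta>. finite A \<and> \<delta> > 0 \<and> (\<forall>M'. finite_borel_measure M' \<longrightarrow>
           (\<forall>m\<in>A. \<bar>integral\<^sup>L M' (gfam c m) - integral\<^sup>L N (gfam c m)\<bar> < \<delta>) \<longrightarrow>
           \<bar>integral\<^sup>L M' f - integral\<^sup>L N f\<bar> < \<epsilon>)"
        by (rule core[where c=c, OF _ N f eps]) (rule dns)
      thus ?thesis using that by blast
    qed
    have "\<bar>integral\<^sup>L M f - integral\<^sup>L N f\<bar> < \<epsilon>"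
      using Ad(3) M Ad(2) eq by simp
    thus False unfolding \<epsilon>_def by simp
  qed
qed

locale lus2 = lus X L "gfam c" for X :: "'b topology" and L and c :: "nat \<Rightarrow> 'a::metric_space" +
  assumes dns: "\<And>y e. e > 0 \<Longrightarrow> \<exists>k. dist y (c k) < e"
    and Lex: "\<And>K. compactin X K \<Longrightarrow> \<exists>n. K \<subseteq> L n"
begin

lemma dd_zero:
  assumes mu: "\<mu> \<in> C" and nu: "\<nu> \<in> C" and z: "dd L (gfam c) \<mu> \<nu> = 0"
  shows "\<mu> = \<nu>"
proof
  fix t
  show "\<mu> t = \<nu> t"
  proof (cases "t \<in> topspace X")
    case True
    then obtain n where n: "{t} \<subseteq> L n" using Lex[of "{t}"] by auto
    have "integral\<^sup>L (\<mu> t) (gfam c m) = integral\<^sup>L (\<nu> t) (gfam c m)" for m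
    proof -
      have "\<bar>integral\<^sup>L (\<mu> t) (gfam c m) - integral\<^sup>L (\<nu> t) (gfam c m)\<bar> \<le> sp (L n) (gfam c m) \<mu> \<nu>"
        using n by (intro sp_ge[OF mu nu gb Lc]) auto
      thus ?thesis using dd_zero_sp[OF mu nu z] by simp
    qed
    thus ?thesis by (intro core_eq[OF dns] pfbm[OF mu True] pfbm[OF nu True])
  next
    case False
    thus ?thesis using mu nu unfolding wcont_paths_def by simp
  qed
qed

definition "dm \<mu> \<nu> = (if \<mu> \<in> C \<and> \<nu> \<in> C then dd L (gfam c) \<mu> \<nu> else 0)"

lemma sp_self: "sp K f \<mu> \<mu> = 0"
  unfolding sp_def by simp

lemma dd_self: "dd L g' \<mu> \<mu> = 0"
  by (simp add: dd_def tm_def sp_self)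

lemma metric: "Metric_space C dm"
proof
  fix x y z
  show "0 \<le> dm x y" unfolding dm_def using dd_nonneg by simp
  show "dm x y = dm y x" unfolding dm_def using dd_commute by auto
  show "x \<in> C \<Longrightarrow> y \<in> C \<Longrightarrow> (dm x y = 0) = (x = y)"
    unfolding dm_def using dd_zero dd_self by auto
  show "x \<in> C \<Longrightarrow> y \<in> C \<Longrightarrow> z \<in> C \<Longrightarrow> dm x z \<le> dm x y + dm y z"
    unfolding dm_def using dd_tri by simp
qed

end

lemma openin_lt:
  assumes "continuous_map X euclideanreal h"
  shows "openin X {t \<in> topspace X. h t < a}"
  using openin_continuous_map_preimage[OF assms, of "{..<a}"] by simp

context lus2
begin

lemma KL:
  assumes mu: "\<mu> \<in> C" and K: "compactin X K" and f: "bcont f" and eps: "\<epsilon> > 0"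
  shows "\<exists>r>0. \<forall>\<nu>\<in>C. dd L (gfam c) \<mu> \<nu> < r \<longrightarrow> sp K f \<mu> \<nu> < \<epsilon>"
proof (cases "K = {}")
  case True
  then show ?thesis using eps by (intro exI[of _ 1]) (simp add: sp_def)
next
  case Kne: False
  obtain n where Kn: "K \<subseteq> L n" using Lex[OF K] by blast
  have Kt: "K \<subseteq> topspace X" using K compactin_subset_topspace by blast
  have eps3: "\<epsilon> / 3 > 0" using eps by simp
  have h1: "\<forall>t\<in>K. \<exists>A \<delta>. finite A \<and> \<delta> > 0 \<and> (\<forall>M. finite_borel_measure M \<longrightarrow>
           (\<forall>m\<in>A. \<bar>integral\<^sup>L M (gfam c m) - integral\<^sup>L (\<mu> t) (gfam c m)\<bar> < \<delta>) \<longrightarrow>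
           \<bar>integral\<^sup>L M f - integral\<^sup>L (\<mu> t) f\<bar> < \<epsilon> / 3)"
  proof
    fix t assume "t \<in> K"
    hence fb: "finite_borel_measure (\<mu> t)" using Kt pfbm[OF mu] by blast
    show "\<exists>A \<delta>. finite A \<and> \<delta> > 0 \<and> (\<forall>M. finite_borel_measure M \<longrightarrow>
           (\<forall>m\<in>A. \<bar>integral\<^sup>L M (gfam c m) - integral\<^sup>L (\<mu> t) (gfam c m)\<bar> < \<delta>) \<longrightarrow>
           \<bar>integral\<^sup>L M f - integral\<^sup>L (\<mu> t) f\<bar> < \<epsilon> / 3)"
      by (rule core[where c=c, OF _ fb f eps3]) (rule dns)
  qed
  obtain A where A: "\<forall>t\<in>K. \<exists>\<delta>. finite (A t) \<and> \<delta> > 0 \<and> (\<forall>M. finite_borel_measure M \<longrightarrow>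
           (\<forall>m\<in>A t. \<bar>integral\<^sup>L M (gfam c m) - integral\<^sup>L (\<mu> t) (gfam c m)\<bar> < \<delta>) \<longrightarrow>
           \<bar>integral\<^sup>L M f - integral\<^sup>L (\<mu> t) f\<bar> < \<epsilon> / 3)"
    using bchoice[OF h1] by (elim exE)
  obtain \<delta> where A\<delta>: "\<forall>t\<in>K. finite (A t) \<and> \<delta> t > 0 \<and> (\<forall>M. finite_borel_measure M \<longrightarrow>
           (\<forall>m\<in>A t. \<bar>integral\<^sup>L M (gfam c m) - integral\<^sup>L (\<mu> t) (gfam c m)\<bar> < \<delta> t) \<longrightarrow>
           \<bar>integral\<^sup>L M f - integral\<^sup>L (\<mu> t) f\<bar> < \<epsilon> / 3)"
    using bchoice[OF A] by (elim exE)
  define W where "W t0 = {t \<in> topspace X. \<bar>integral\<^sup>L (\<mu> t) f - integral\<^sup>L (\<mu> t0) f\<bar> < \<epsilon> / 3} \<inter>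
      ((\<Inter>m\<in>A t0. {t \<in> topspace X. \<bar>integral\<^sup>L (\<mu> t) (gfam c m) - integral\<^sup>L (\<mu> t0) (gfam c m)\<bar> < \<delta> t0 / 2}) \<inter> topspace X)" for t0
  have Wopen: "openin X (W t0)" if "t0 \<in> K" for t0
  proof -
    have o1: "openin X {t \<in> topspace X. \<bar>integral\<^sup>L (\<mu> t) f - integral\<^sup>L (\<mu> t0) f\<bar> < \<epsilon> / 3}"
      by (intro openin_lt continuous_intros pcont[OF mu f])
    have fA: "finite (A t0)" using A\<delta> that by blast
    have o2: "openin X ((\<Inter>m\<in>A t0. {t \<in> topspace X. \<bar>integral\<^sup>L (\<mu> t) (gfam c m) - integral\<^sup>L (\<mu> t0) (gfam c m)\<bar> < \<delta> t0 / 2}) \<inter> topspace X)"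
      by (rule openin_INT[OF fA]) (intro openin_lt continuous_intros pcont[OF mu bcont_gfam])
    show ?thesis unfolding W_def using o1 o2 by (rule openin_Int)
  qed
  have Win: "t0 \<in> W t0" if "t0 \<in> K" for t0
    using that Kt A\<delta> eps unfolding W_def by auto
  obtain K0 where K0: "K0 \<subseteq> K" "finite K0" "K \<subseteq> \<Union>(W ` K0)"
    using compact_finite_subcover[OF K Wopen Win] by blast
  have K0ne: "K0 \<noteq> {}" using K0(3) Kne by auto
  define \<delta>' where "\<delta>' = Min ((\<lambda>t. \<delta> t / 2) ` K0)"
  have \<delta>'le: "\<delta>' \<le> \<delta> t / 2" if "t \<in> K0" for t
    unfolding \<delta>'_def by (rule Min_le) (use K0(2) that in auto)
  have \<delta>'pos: "\<delta>' > 0"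
    unfolding \<delta>'_def using K0 K0ne A\<delta> by (subst Min_gr_iff) auto
  define AA where "AA = \<Union>(A ` K0)"
  have AAfin: "finite AA" unfolding AA_def using K0 A\<delta> by auto
  define J where "J = (\<lambda>m. prod_encode (n, m)) ` AA"
  define r where "r = Min (insert 1 ((\<lambda>j. (1/2)^j * min 1 \<delta>') ` J))"
  have rpos: "r > 0" unfolding r_def using AAfin \<delta>'pos unfolding J_def by (subst Min_gr_iff) auto
  have rle: "r \<le> (1/2)^j * min 1 \<delta>'" if "j \<in> J" for j
    unfolding r_def by (rule Min_le) (use AAfin that in \<open>auto simp: J_def\<close>)
  show ?thesis
  proof (intro exI[of _ r] conjI ballI impI rpos)
    fix \<nu> assume nu: "\<nu> \<in> C" and dlt: "dd L (gfam c) \<mu> \<nu> < r"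
    have spm: "sp (L n) (gfam c m) \<mu> \<nu> < \<delta>'" if "m \<in> AA" for m
    proof -
      define j where "j = prod_encode (n, m)"
      have jJ: "j \<in> J" unfolding J_def j_def using that by blast
      have "tm L (gfam c) \<mu> \<nu> j < (1/2)^j * min 1 \<delta>'"
        using tm_le_dd[OF mu nu, of j] dlt rle[OF jJ] by linarith
      hence "(1/2)^j * min 1 (sp (L n) (gfam c m) \<mu> \<nu>) < (1/2)^j * min 1 \<delta>'"
        unfolding tm_def j_def by simp
      hence "min 1 (sp (L n) (gfam c m) \<mu> \<nu>) < min 1 \<delta>'" by simp
      thus ?thesis by (simp add: min_def split: if_splits)
    qed
    have pt: "\<bar>integral\<^sup>L (\<mu> t) f - integral\<^sup>L (\<nu> t) f\<bar> \<le> 2 * \<epsilon> / 3" if t: "t \<in> K" for t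
    proof -
      obtain t0 where t0: "t0 \<in> K0" "t \<in> W t0" using K0(3) t by blast
      have t0K: "t0 \<in> K" using t0 K0 by blast
      have tt: "t \<in> topspace X" using t Kt by blast
      have tL: "t \<in> L n" using t Kn by blast
      have w1: "\<bar>integral\<^sup>L (\<mu> t) f - integral\<^sup>L (\<mu> t0) f\<bar> < \<epsilon> / 3" using t0(2) unfolding W_def by blast
      have w2: "\<bar>integral\<^sup>L (\<mu> t) (gfam c m) - integral\<^sup>L (\<mu> t0) (gfam c m)\<bar> < \<delta> t0 / 2" if "m \<in> A t0" for m
        using t0(2) that unfolding W_def by blast
      have close: "\<bar>integral\<^sup>L (\<nu> t) (gfam c m) - integral\<^sup>L (\<mu> t0) (gfam c m)\<bar> < \<delta> t0" if m: "m \<in> A t0" for m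
      proof -
        have "m \<in> AA" unfolding AA_def using m t0 by blast
        hence "\<bar>integral\<^sup>L (\<mu> t) (gfam c m) - integral\<^sup>L (\<nu> t) (gfam c m)\<bar> < \<delta>'"
          using sp_ge[OF mu nu bcont_gfam Lc tL] spm by (meson order_le_less_trans)
        thus ?thesis using w2[OF m] \<delta>'le[OF t0(1)] by linarith
      qed
      have "\<bar>integral\<^sup>L (\<nu> t) f - integral\<^sup>L (\<mu> t0) f\<bar> < \<epsilon> / 3"
        using A\<delta> t0K pfbm[OF nu tt] close by blast
      thus ?thesis using w1 by linarith
    qed
    have "sp K f \<mu> \<nu> \<le> 2 * \<epsilon> / 3"
      by (rule sp_le) (use eps pt in auto)
    thus "sp K f \<mu> \<nu> < \<epsilon>" using eps by linarith
  qed
qed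

end

lemma istop: "istopology (\<lambda>U. U \<subseteq> wcont_paths X \<and> (\<forall>\<mu>\<in>U. \<exists>E\<in>lu_uniformity X. {\<nu>. (\<mu>, \<nu>) \<in> E} \<subseteq> U))"
  unfolding istopology_def
proof (rule conjI; intro allI impI)
  fix S T :: "('a \<Rightarrow> 'b::metric_space measure) set"
  assume S: "S \<subseteq> wcont_paths X \<and> (\<forall>\<mu>\<in>S. \<exists>E\<in>lu_uniformity X. {\<nu>. (\<mu>, \<nu>) \<in> E} \<subseteq> S)"
    and T: "T \<subseteq> wcont_paths X \<and> (\<forall>\<mu>\<in>T. \<exists>E\<in>lu_uniformity X. {\<nu>. (\<mu>, \<nu>) \<in> E} \<subseteq> T)"
  show "S \<inter> T \<subseteq> wcont_paths X \<and> (\<forall>\<mu>\<in>S \<inter> T. \<exists>E\<in>lu_uniformity X. {\<nu>. (\<mu>, \<nu>) \<in> E} \<subseteq> S \<inter> T)"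
  proof (intro conjI ballI)
    show "S \<inter> T \<subseteq> wcont_paths X" using S by blast
    fix \<mu> assume "\<mu> \<in> S \<inter> T"
    then obtain E1 E2 where E1: "E1 \<in> lu_uniformity X" "{\<nu>. (\<mu>, \<nu>) \<in> E1} \<subseteq> S"
      and E2: "E2 \<in> lu_uniformity X" "{\<nu>. (\<mu>, \<nu>) \<in> E2} \<subseteq> T" using S T by blast
    obtain F1 where F1: "finite F1" "F1 \<subseteq> lu_subbase X" "(wcont_paths X \<times> wcont_paths X) \<inter> \<Inter>F1 \<subseteq> E1"
      and E1s: "E1 \<subseteq> wcont_paths X \<times> wcont_paths X"
      using E1(1) unfolding lu_uniformity_def by blast
    obtain F2 where F2: "finite F2" "F2 \<subseteq> lu_subbase X" "(wcont_paths X \<times> wcont_paths X) \<inter> \<Inter>F2 \<subseteq> E2"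
      and E2s: "E2 \<subseteq> wcont_paths X \<times> wcont_paths X"
      using E2(1) unfolding lu_uniformity_def by blast
    have FF: "finite (F1 \<union> F2) \<and> F1 \<union> F2 \<subseteq> lu_subbase X \<and> (wcont_paths X \<times> wcont_paths X) \<inter> \<Inter>(F1 \<union> F2) \<subseteq> E1 \<inter> E2"
      using F1 F2 by blast
    have "E1 \<inter> E2 \<subseteq> wcont_paths X \<times> wcont_paths X" using E1s by blast
    hence "E1 \<inter> E2 \<in> lu_uniformity X"
      unfolding lu_uniformity_def using FF by blast
    moreover have "{\<nu>. (\<mu>, \<nu>) \<in> E1 \<inter> E2} \<subseteq> S \<inter> T" using E1(2) E2(2) by blast
    ultimately show "\<exists>E\<in>lu_uniformity X. {\<nu>. (\<mu>, \<nu>) \<in> E} \<subseteq> S \<inter> T" by blast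
  qed
next
  fix \<K> :: "('a \<Rightarrow> 'b::metric_space measure) set set"
  assume K: "\<forall>K\<in>\<K>. K \<subseteq> wcont_paths X \<and> (\<forall>\<mu>\<in>K. \<exists>E\<in>lu_uniformity X. {\<nu>. (\<mu>, \<nu>) \<in> E} \<subseteq> K)"
  show "\<Union>\<K> \<subseteq> wcont_paths X \<and> (\<forall>\<mu>\<in>\<Union>\<K>. \<exists>E\<in>lu_uniformity X. {\<nu>. (\<mu>, \<nu>) \<in> E} \<subseteq> \<Union>\<K>)"
  proof (intro conjI ballI)
    show "\<Union>\<K> \<subseteq> wcont_paths X" using K by blast
    fix \<mu> assume "\<mu> \<in> \<Union>\<K>"
    then obtain U where U: "U \<in> \<K>" "\<mu> \<in> U" by blast
    then obtain E where "E \<in> lu_uniformity X" "{\<nu>. (\<mu>, \<nu>) \<in> E} \<subseteq> U" using K by blast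
    thus "\<exists>E\<in>lu_uniformity X. {\<nu>. (\<mu>, \<nu>) \<in> E} \<subseteq> \<Union>\<K>" using U by blast
  qed
qed

lemma openin_lu: "openin (lu_topology X) U \<longleftrightarrow> U \<subseteq> wcont_paths X \<and> (\<forall>\<mu>\<in>U. \<exists>E\<in>lu_uniformity X. {\<nu>. (\<mu>, \<nu>) \<in> E} \<subseteq> U)"
  unfolding lu_topology_def by (subst topology_inverse'[OF istop]) (rule refl)

context lus
begin

lemma dd_small:
  assumes mu: "\<mu> \<in> C" and nu: "\<nu> \<in> C" and r: "r > 0" and J: "(1/2::real)^J < r / 4"
    and sm: "\<And>j. j < J \<Longrightarrow> sp (L (fst (prod_decode j))) (g (snd (prod_decode j))) \<mu> \<nu> < r / 4"
  shows "dd L g \<mu> \<nu> < r"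
proof -
  have sum1: "summable (tm L g \<mu> \<nu>)" by (rule tm_summable[OF mu nu])
  have geo: "summable (\<lambda>n. (1/2::real)^n)" "(\<Sum>n. (1/2::real)^n) = 2"
    using summable_geometric[of "1/2::real"] suminf_geometric[of "1/2::real"] by simp_all
  have "dd L g \<mu> \<nu> = (\<Sum>n. tm L g \<mu> \<nu> (n + J)) + (\<Sum>i<J. tm L g \<mu> \<nu> i)"
    unfolding dd_def by (rule suminf_split_initial_segment[OF sum1])
  moreover have "(\<Sum>n. tm L g \<mu> \<nu> (n + J)) \<le> (\<Sum>n. (1/2)^J * (1/2)^n)"
  proof (rule suminf_le)
    show "tm L g \<mu> \<nu> (n + J) \<le> (1/2)^J * (1/2)^n" for n
      using tm_le[OF mu nu, of "n + J"] by (simp add: power_add mult.commute)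
    show "summable (\<lambda>n. tm L g \<mu> \<nu> (n + J))" by (rule summable_ignore_initial_segment[OF sum1])
    show "summable (\<lambda>n. (1/2::real)^J * (1/2)^n)" by (rule summable_mult[OF geo(1)])
  qed
  moreover have "(\<Sum>n. (1/2::real)^J * (1/2)^n) = (1/2)^J * 2"
    using suminf_mult[OF geo(1), of "(1/2)^J"] geo(2) by simp
  moreover have "(\<Sum>i<J. tm L g \<mu> \<nu> i) \<le> (\<Sum>i<J. r / 4 * (1/2)^i)"
  proof (rule sum_mono)
    fix i assume "i \<in> {..<J}"
    hence s: "sp (L (fst (prod_decode i))) (g (snd (prod_decode i))) \<mu> \<nu> < r / 4" using sm by simp
    have "min 1 (sp (L (fst (prod_decode i))) (g (snd (prod_decode i))) \<mu> \<nu>) \<le> r / 4"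
      using s by linarith
    hence "(1/2::real)^i * min 1 (sp (L (fst (prod_decode i))) (g (snd (prod_decode i))) \<mu> \<nu>) \<le> (1/2)^i * (r / 4)"
      by (intro mult_left_mono) auto
    thus "tm L g \<mu> \<nu> i \<le> r / 4 * (1/2)^i" unfolding tm_def by (simp add: mult.commute)
  qed
  moreover have "(\<Sum>i<J. r / 4 * (1/2::real)^i) \<le> (\<Sum>i. r / 4 * (1/2)^i)"
    by (rule sum_le_suminf) (use r summable_mult[OF geo(1)] in auto)
  moreover have "(\<Sum>i. r / 4 * (1/2::real)^i) = r / 2"
    using suminf_mult[OF geo(1), of "r/4"] geo(2) by simp
  ultimately show ?thesis using J by linarith
qed

end

context lus2
begin

lemma subbase_mem:
  assumes "V \<in> lu_subbase X"
  shows "\<exists>K f \<epsilon>. V = {(\<mu>, \<nu>) \<in> C \<times> C. K = {} \<or> (SUP t\<in>K. \<bar>integral\<^sup>L (\<mu> t) f - integral\<^sup>L (\<nu> t) f\<bar>) < \<epsilon>}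
     \<and> compactin X K \<and> bcont f \<and> \<epsilon> > 0"
  using assms unfolding lu_subbase_def by (simp only: mem_Collect_eq)

lemma topo_eq: "lu_topology X = Metric_space.mtopology C dm"
  unfolding topology_eq
proof (intro allI)
  interpret MS: Metric_space C dm by (rule metric)
  fix U :: "('b \<Rightarrow> 'a measure) set"
  show "openin (lu_topology X) U \<longleftrightarrow> openin MS.mtopology U"
    unfolding openin_lu MS.openin_mtopology
  proof (intro iffI conjI allI impI ballI)
    assume H: "U \<subseteq> C \<and> (\<forall>\<mu>\<in>U. \<exists>E\<in>lu_uniformity X. {\<nu>. (\<mu>, \<nu>) \<in> E} \<subseteq> U)"
    show "U \<subseteq> C" using H by blast
    fix \<mu> assume muU: "\<mu> \<in> U"
    hence mu: "\<mu> \<in> C" using H by blast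
    obtain E where E: "E \<in> lu_uniformity X" "{\<nu>. (\<mu>, \<nu>) \<in> E} \<subseteq> U" using H muU by blast
    obtain F where F: "finite F" "F \<subseteq> lu_subbase X" "(C \<times> C) \<inter> \<Inter>F \<subseteq> E"
      using E(1) unfolding lu_uniformity_def by blast
    have hV: "\<forall>V\<in>F. \<exists>r>0. \<forall>\<nu>\<in>C. dd L (gfam c) \<mu> \<nu> < r \<longrightarrow> (\<mu>, \<nu>) \<in> V"
    proof
      fix V assume VF: "V \<in> F"
      have Vs: "V \<in> lu_subbase X" using F(2) VF by (rule subsetD)
      then obtain K f \<epsilon> where Kf: "compactin X K" "bcont f" "\<epsilon> > 0"
        and V: "V = {(\<mu>, \<nu>) \<in> C \<times> C. K = {} \<or> (SUP t\<in>K. \<bar>integral\<^sup>L (\<mu> t) f - integral\<^sup>L (\<nu> t) f\<bar>) < \<epsilon>}"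
        using subbase_mem[OF Vs] by (elim exE conjE)
      obtain r where r: "r > 0" "\<forall>\<nu>\<in>C. dd L (gfam c) \<mu> \<nu> < r \<longrightarrow> sp K f \<mu> \<nu> < \<epsilon>"
        using KL[OF mu Kf] by blast
      show "\<exists>r>0. \<forall>\<nu>\<in>C. dd L (gfam c) \<mu> \<nu> < r \<longrightarrow> (\<mu>, \<nu>) \<in> V"
      proof (intro exI[of _ r] conjI ballI impI)
        show "r > 0" by fact
        fix \<nu> assume nu: "\<nu> \<in> C" "dd L (gfam c) \<mu> \<nu> < r"
        hence "sp K f \<mu> \<nu> < \<epsilon>" using r by blast
        hence hh: "K = {} \<or> (SUP t\<in>K. \<bar>integral\<^sup>L (\<mu> t) f - integral\<^sup>L (\<nu> t) f\<bar>) < \<epsilon>"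
          using sp_lt_iff[OF Kf(3), of K \<mu> f \<nu>] by (simp only:)
        show "(\<mu>, \<nu>) \<in> V" unfolding V using mu nu(1) hh by simp
      qed
    qed
    obtain R where R: "\<forall>V\<in>F. R V > 0 \<and> (\<forall>\<nu>\<in>C. dd L (gfam c) \<mu> \<nu> < R V \<longrightarrow> (\<mu>, \<nu>) \<in> V)"
      using bchoice[OF hV] by (elim exE)
    define r where "r = Min (insert 1 (R ` F))"
    have rpos: "r > 0" unfolding r_def using F(1) R by (subst Min_gr_iff) auto
    have rle: "r \<le> R V" if "V \<in> F" for V
      unfolding r_def by (rule Min_le) (use F(1) that in auto)
    show "\<exists>r>0. MS.mball \<mu> r \<subseteq> U"
    proof (intro exI[of _ r] conjI subsetI rpos)
      fix \<nu> assume "\<nu> \<in> MS.mball \<mu> r"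
      hence nu: "\<nu> \<in> C" "dm \<mu> \<nu> < r" by auto
      hence dlt: "dd L (gfam c) \<mu> \<nu> < r" unfolding dm_def using mu by simp
      have inV: "(\<mu>, \<nu>) \<in> V" if "V \<in> F" for V
      proof -
        have "R V > 0 \<and> (\<forall>\<nu>\<in>C. dd L (gfam c) \<mu> \<nu> < R V \<longrightarrow> (\<mu>, \<nu>) \<in> V)" using R that by (rule bspec)
        moreover have "dd L (gfam c) \<mu> \<nu> < R V" using dlt rle[OF that] by linarith
        ultimately show ?thesis using nu(1) by blast
      qed
      have "(\<mu>, \<nu>) \<in> (C \<times> C) \<inter> \<Inter>F" using mu nu(1) inV by blast
      hence "(\<mu>, \<nu>) \<in> E" by (rule subsetD[OF F(3)])
      thus "\<nu> \<in> U" using E(2) by blast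
    qed
  next
    assume H: "U \<subseteq> C \<and> (\<forall>x. x \<in> U \<longrightarrow> (\<exists>r>0. MS.mball x r \<subseteq> U))"
    show "U \<subseteq> C" using H by blast
    fix \<mu> assume muU: "\<mu> \<in> U"
    hence mu: "\<mu> \<in> C" using H by blast
    obtain r where r: "r > 0" "MS.mball \<mu> r \<subseteq> U" using H muU by blast
    obtain J where J: "(1/2::real)^J < r / 4" using real_arch_pow_inv[of "r/4" "1/2"] r by auto
    define V where "V j = {(\<mu>, \<nu>) \<in> C \<times> C. L (fst (prod_decode j)) = {} \<or>
       (SUP t\<in>L (fst (prod_decode j)). \<bar>integral\<^sup>L (\<mu> t) (gfam c (snd (prod_decode j))) - integral\<^sup>L (\<nu> t) (gfam c (snd (prod_decode j)))\<bar>) < r / 4}" for j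
    define F where "F = V ` {..<J}"
    have Vsub: "V j \<in> lu_subbase X" for j
      unfolding lu_subbase_def V_def using Lc bcont_gfam r(1)
      by (intro CollectI exI[of _ "L (fst (prod_decode j))"] exI[of _ "gfam c (snd (prod_decode j))"] exI[of _ "r/4"]) auto
    define E where "E = (C \<times> C) \<inter> \<Inter>F"
    have "E \<in> lu_uniformity X"
    proof -
      have "finite F \<and> F \<subseteq> lu_subbase X \<and> (C \<times> C) \<inter> \<Inter>F \<subseteq> E"
        unfolding F_def E_def using Vsub by auto
      moreover have "E \<subseteq> C \<times> C" unfolding E_def by blast
      ultimately show ?thesis unfolding lu_uniformity_def by blast
    qed
    moreover have "{\<nu>. (\<mu>, \<nu>) \<in> E} \<subseteq> U"
    proof
      fix \<nu> assume "\<nu> \<in> {\<nu>. (\<mu>, \<nu>) \<in> E}"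
      hence E': "(\<mu>, \<nu>) \<in> E" by simp
      hence nu: "\<nu> \<in> C" unfolding E_def by blast
      have "sp (L (fst (prod_decode j))) (gfam c (snd (prod_decode j))) \<mu> \<nu> < r / 4" if "j < J" for j
      proof -
        have "(\<mu>, \<nu>) \<in> V j" using E' that unfolding E_def F_def by blast
        hence "L (fst (prod_decode j)) = {} \<or>
          (SUP t\<in>L (fst (prod_decode j)). \<bar>integral\<^sup>L (\<mu> t) (gfam c (snd (prod_decode j))) - integral\<^sup>L (\<nu> t) (gfam c (snd (prod_decode j)))\<bar>) < r / 4"
          unfolding V_def by blast
        moreover have r4: "r / 4 > 0" using r(1) by simp
        ultimately show ?thesis using sp_lt_iff[OF r4] by blast
      qed
      hence "dd L (gfam c) \<mu> \<nu> < r" by (intro dd_small[OF mu nu r(1) J])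
      hence "dm \<mu> \<nu> < r" using mu nu unfolding dm_def by simp
      hence "\<nu> \<in> MS.mball \<mu> r" using mu nu by (simp only: MS.in_mball simp_thms)
      thus "\<nu> \<in> U" using r(2) by blast
    qed
    ultimately show "\<exists>E\<in>lu_uniformity X. {\<nu>. (\<mu>, \<nu>) \<in> E} \<subseteq> U" by blast
  qed
qed

lemma metrizable: "metrizable_space (lu_topology X :: ('b \<Rightarrow> 'a measure) topology)"
  unfolding metrizable_space_def using metric topo_eq by blast

end

theorem proposition2p2:
  fixes X :: "'b topology"
  assumes "separable_space (euclidean :: 'a::metric_space topology)"
    and "sigma_compact_space X"
    and "locally_compact_space X"
  shows "metrizable_space (lu_topology X :: ('b \<Rightarrow> 'a measure) topology)"
proof -
  obtain D :: "'a set" where D: "countable D" "closure D = UNIV"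
    using assms(1) unfolding separable_space_def by auto
  have Dne: "D \<noteq> {}" using D(2) by auto
  define c where "c = from_nat_into D"
  have dns: "\<exists>k. dist y (c k) < e" if "e > 0" for y e
  proof -
    have "y \<in> closure D" using D(2) by simp
    hence "\<exists>x\<in>D. dist x y < e" using that unfolding closure_approachable by blast
    then obtain x where x: "x \<in> D" "dist x y < e" by blast
    have "x \<in> range c" unfolding c_def using range_from_nat_into[OF Dne D(1)] x(1) by simp
    then obtain k where "x = c k" by blast
    thus ?thesis using x(2) by (auto simp: dist_commute)
  qed
  obtain L :: "nat \<Rightarrow> 'b set" where L: "\<forall>n. compactin X (L n)" "\<forall>K. compactin X K \<longrightarrow> (\<exists>n. K \<subseteq> L n)"
    using exhaustion[OF assms(2,3)] by (elim exE conjE)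
  interpret lus2 X L c
    by unfold_locales (use L dns bcont_gfam in auto)
  show ?thesis by (rule metrizable)
qed

end
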